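(* Let $\mathbb{X}$ be a real or complex Banach algebra with identity, $\mathcal{G}$ its group of units, $k\ge1$ an integer, $a_0,\dots,a_k,b_0,\dots,b_k\in\mathbb{X}$ with $a_k\ne0$ or $b_k\ne0$, and $g_n:\mathbb{X}\to\mathbb{X}$ ($n\ge0$) functions satisfying $|g_n(\xi)|\le\sigma|\xi|$ for all $\xi\in\mathbb{X}$ and all $n$, for some real $\sigma>0$. Then every solution $\{x_n\}$ of $$x_{n+1}=\sum_{i=0}^{k}a_ix_{n-i}+g_n\Big(\sum_{i=0}^{k}b_ix_{n-i}\Big),\quad n\ge0,$$ converges to $0$ in norm provided either (a) $\sum_{i=0}^{k}(|a_i|+\sigma|b_i|)<1$; or (b) the polynomials $P(\xi)=\xi^{k+1}-\sum_{i=0}^{k}a_i\xi^{k-i}$ and $Q(\xi)=\sum_{i=0}^{k}b_i\xi^{k-i}$ have a common root $\rho\in\mathcal{G}$ with $|\rho|<1$ and $$\sum_{i=0}^{k-1}\big(|p_i|+\sigma|q_i|\big)<1,$$ where $p_i=\rho^{i+1}-a_0\rho^i-\cdots-a_i$ and $q_i=b_0\rho^i+b_1\rho^{i-1}+\cdots+b_i$ for $i=0,\dots,k-1$.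
   Context: A Banach algebra with identity is a Banach space $\mathbb{X}$ (norm $|\cdot|$) with an associative bilinear multiplication satisfying $|xy|\le|x||y|$ and an identity $1$ with $|1|=1$. $\mathcal{G}$ is the set of invertible elements. Polynomials are evaluated with coefficients on the left. Solutions are generated by iteration from arbitrary initial values $x_0,\dots,x_{-k}\in\mathbb{X}$. *)

theory Defs
  imports "HOL-Analysis.Analysis"
begin

definition is_unit_elem :: "'a::monoid_mult \<Rightarrow> bool" where
  "is_unit_elem x \<longleftrightarrow> (\<exists>y. x * y = 1 \<and> y * x = 1)"

definition polyP :: "nat \<Rightarrow> (nat \<Rightarrow> 'a::ring_1) \<Rightarrow> 'a \<Rightarrow> 'a" where
  "polyP k a \<xi> = \<xi> ^ (k + 1) - (\<Sum>i=0..k. a i * \<xi> ^ (k - i))"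

definition polyQ :: "nat \<Rightarrow> (nat \<Rightarrow> 'a::ring_1) \<Rightarrow> 'a \<Rightarrow> 'a" where
  "polyQ k b \<xi> = (\<Sum>i=0..k. b i * \<xi> ^ (k - i))"

definition pcoef :: "(nat \<Rightarrow> 'a::ring_1) \<Rightarrow> 'a \<Rightarrow> nat \<Rightarrow> 'a" where
  "pcoef a \<rho> i = \<rho> ^ (i + 1) - (\<Sum>j=0..i. a j * \<rho> ^ (i - j))"

definition qcoef :: "(nat \<Rightarrow> 'a::ring_1) \<Rightarrow> 'a \<Rightarrow> nat \<Rightarrow> 'a" where
  "qcoef b \<rho> i = (\<Sum>j=0..i. b j * \<rho> ^ (i - j))"

end

theory Submission
  imports Defs
begin

lemma decay_nat:
  fixes v c :: "nat \<Rightarrow> real" and m :: nat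
  assumes v0: "\<And>n. v n \<ge> 0" and c0: "\<And>i. c i \<ge> 0" and cs: "(\<Sum>i=0..m. c i) < 1"
    and step: "\<And>n. n \<ge> m \<Longrightarrow> v (Suc n) \<le> (\<Sum>i=0..m. c i * v (n - i))"
  shows "v \<longlonglongrightarrow> 0"
proof -
  define C where "C = (\<Sum>i=0..m. c i)"
  define B where "B = (\<Sum>j=0..m. v j)"
  have C0: "0 \<le> C" unfolding C_def by (simp add: c0 sum_nonneg)
  have C1: "C < 1" using cs C_def by simp
  have B0: "0 \<le> B" unfolding B_def by (simp add: v0 sum_nonneg)
  have bound: "v n \<le> B * C ^ (n div (Suc m))" for n
  proof (induction n rule: less_induct)
    case (less n)
    show ?case
    proof (cases "n \<le> m")
      case True
      then have "n div Suc m = 0" by simp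
      moreover have "v n \<le> B" unfolding B_def
        by (rule member_le_sum) (use True v0 in auto)
      ultimately show ?thesis by simp
    next
      case False
      then obtain n' where n': "n = Suc n'" "n' \<ge> m" by (cases n) auto
      define d where "d = (n' - m) div Suc m"
      have dn: "Suc d = n div Suc m"
      proof -
        have "n = (n' - m) + Suc m" using n' by simp
        then have "n div Suc m = (n' - m) div Suc m + 1"
          by (metis div_add_self2 nat.simps(3))
        then show ?thesis by (simp add: d_def)
      qed
      have each: "v (n' - i) \<le> B * C ^ d" if "i \<in> {0..m}" for i
      proof -
        have "v (n' - i) \<le> B * C ^ ((n' - i) div Suc m)"
          using less.IH[of "n' - i"] n' by simp
        also have "\<dots> \<le> B * C ^ d"
          apply (rule mult_left_mono[OF _ B0])
          apply (rule power_decreasing)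
          using that C0 C1 by (auto simp: d_def intro: div_le_mono)
        finally show ?thesis .
      qed
      have "v n \<le> (\<Sum>i=0..m. c i * v (n' - i))" using step n' by simp
      also have "\<dots> \<le> (\<Sum>i=0..m. c i * (B * C ^ d))"
        by (rule sum_mono) (use each c0 in \<open>auto intro: mult_left_mono\<close>)
      also have "\<dots> = C * (B * C ^ d)" by (simp add: C_def sum_distrib_right)
      also have "\<dots> = B * C ^ (n div Suc m)" by (simp flip: dn)
      finally show ?thesis .
    qed
  qed
  have lim: "(\<lambda>n. B * C ^ (n div Suc m)) \<longlonglongrightarrow> 0"
  proof -
    have "(\<lambda>n. C ^ (n div Suc m)) \<longlonglongrightarrow> 0"
      using filterlim_compose[OF LIMSEQ_power_zero[of C] filterlim_at_top_div_const_nat[of "Suc m"]]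
        C0 C1 by simp
    then show ?thesis by (simp add: tendsto_mult_right_zero)
  qed
  show ?thesis
    by (rule Lim_null_comparison[OF _ lim]) (use bound v0 in auto)
qed

lemma decay_int:
  fixes w :: "int \<Rightarrow> real" and c :: "nat \<Rightarrow> real" and m :: nat
  assumes w0: "\<And>N. w N \<ge> 0" and c0: "\<And>i. c i \<ge> 0" and cs: "(\<Sum>i=0..m. c i) < 1"
    and step: "\<And>N. N \<ge> 0 \<Longrightarrow> w (N + 1) \<le> (\<Sum>i=0..m. c i * w (N - int i))"
  shows "(\<lambda>n. w (int n)) \<longlonglongrightarrow> 0"
proof -
  define v where "v n = w (int n - int m)" for n
  have "v \<longlonglongrightarrow> 0"
  proof (rule decay_nat[of v c m])
    show "0 \<le> v n" for n by (simp add: v_def w0)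
    show "0 \<le> c i" for i by (rule c0)
    show "sum c {0..m} < 1" by (rule cs)
    fix n assume n: "m \<le> n"
    have "v (Suc n) = w ((int n - int m) + 1)" by (simp add: v_def algebra_simps)
    also have "\<dots> \<le> (\<Sum>i=0..m. c i * w ((int n - int m) - int i))"
      using step[of "int n - int m"] n by simp
    also have "\<dots> = (\<Sum>i=0..m. c i * v (n - i))"
      by (rule sum.cong) (use n in \<open>auto simp: v_def of_nat_diff algebra_simps\<close>)
    finally show "v (Suc n) \<le> (\<Sum>i=0..m. c i * v (n - i))" .
  qed
  then have "(\<lambda>n. v (n + m)) \<longlonglongrightarrow> 0" by (rule LIMSEQ_ignore_initial_segment)
  then show ?thesis by (simp add: v_def)
qed

lemma decay_inhom:
  fixes w e :: "nat \<Rightarrow> real"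
  assumes w0: "\<And>n. w n \<ge> 0" and r0: "0 \<le> r" and r1: "r < 1" and e: "e \<longlonglongrightarrow> 0"
    and step: "\<And>n. w (Suc n) \<le> r * w n + e (Suc n)"
  shows "w \<longlonglongrightarrow> 0"
proof (rule LIMSEQ_I)
  fix \<epsilon> :: real assume ep: "\<epsilon> > 0"
  have "\<epsilon> * (1 - r) / 2 > 0" using ep r1 by simp
  from LIMSEQ_D[OF e this] obtain N where
    N': "\<forall>n\<ge>N. norm (e n - 0) < \<epsilon> * (1 - r) / 2" by blast
  have N: "\<And>n. n \<ge> N \<Longrightarrow> norm (e n) < \<epsilon> * (1 - r) / 2" using N' by simp
  have claim: "w (N + j) \<le> r ^ j * w N + \<epsilon> / 2" for j
  proof (induction j)
    case 0
    then show ?case using ep by simp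
  next
    case (Suc j)
    have "w (N + Suc j) \<le> r * w (N + j) + e (Suc (N + j))" using step[of "N + j"] by simp
    also have "\<dots> \<le> r * (r ^ j * w N + \<epsilon> / 2) + \<epsilon> * (1 - r) / 2"
      using N[of "Suc (N + j)"] Suc.IH r0
      by (intro add_mono mult_left_mono) auto
    also have "\<dots> = r ^ Suc j * w N + \<epsilon> / 2" by (simp add: field_simps)
    finally show ?case .
  qed
  have "(\<lambda>j. r ^ j * w N) \<longlonglongrightarrow> 0"
    using LIMSEQ_power_zero[of r] r0 r1 by (simp add: tendsto_mult_left_zero)
  moreover have "\<epsilon> / 2 > 0" using ep by simp
  ultimately obtain J where J': "\<forall>j\<ge>J. norm (r ^ j * w N - 0) < \<epsilon> / 2"
    using LIMSEQ_D by blast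
  have J: "\<And>j. j \<ge> J \<Longrightarrow> norm (r ^ j * w N) < \<epsilon> / 2" using J' by simp
  show "\<exists>no. \<forall>n\<ge>no. norm (w n - 0) < \<epsilon>"
  proof (intro exI allI impI)
    fix n assume n: "N + J \<le> n"
    define j where "j = n - N"
    have j: "n = N + j" "j \<ge> J" using n by (auto simp: j_def)
    have "w n \<le> r ^ j * w N + \<epsilon> / 2" using claim j by simp
    moreover have "r ^ j * w N < \<epsilon> / 2" using J[OF j(2)] by simp
    ultimately show "norm (w n - 0) < \<epsilon>" using w0[of n] by simp
  qed
qed

lemma telescope:
  fixes r e y :: "nat \<Rightarrow> 'a::ring_1" and \<rho> :: 'a
  assumes rs: "\<And>i. r (Suc i) = r i * \<rho> + e (Suc i)"
  shows "(\<Sum>i=0..K. r i * (y i - \<rho> * y (Suc i)))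
     = r 0 * y 0 + (\<Sum>i<K. e (Suc i) * y (Suc i)) - r K * \<rho> * y (Suc K)"
proof (induction K)
  case 0
  then show ?case by (simp add: algebra_simps)
next
  case (Suc K)
  show ?case using Suc by (simp add: rs algebra_simps)
qed

lemma qcoef_Suc: "qcoef b \<rho> (Suc i) = qcoef b \<rho> i * \<rho> + b (Suc i)"
proof -
  have "(\<Sum>j=0..i. b j * \<rho> ^ (Suc i - j)) = (\<Sum>j=0..i. b j * \<rho> ^ (i - j)) * \<rho>"
    by (simp add: sum_distrib_right mult.assoc Suc_diff_le power_commutes)
  then show ?thesis unfolding qcoef_def by simp
qed

lemma pcoef_Suc: "pcoef a \<rho> (Suc i) = pcoef a \<rho> i * \<rho> + (- a (Suc i))"
proof -
  have "(\<Sum>j=0..i. a j * \<rho> ^ (Suc i - j)) = (\<Sum>j=0..i. a j * \<rho> ^ (i - j)) * \<rho>"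
    by (simp add: sum_distrib_right mult.assoc Suc_diff_le power_commutes)
  then show ?thesis unfolding pcoef_def by (simp add: algebra_simps power_commutes)
qed

lemma sum_split0:
  "(\<Sum>i=0..Suc K. f i) = f 0 + (\<Sum>i<K. f (Suc i)) + (f (Suc K) :: 'a::comm_monoid_add)"
proof -
  have "(\<Sum>i=0..Suc K. f i) = f 0 + (\<Sum>i\<le>K. f (Suc i))"
    by (simp only: atLeast0AtMost sum.atMost_Suc_shift)
  also have "(\<Sum>i\<le>K. f (Suc i)) = (\<Sum>i<K. f (Suc i)) + f (Suc K)"
    by (simp flip: lessThan_Suc_atMost)
  finally show ?thesis by (simp add: add.assoc)
qed

theorem theorem1:
  fixes a b :: "nat \<Rightarrow> 'a::{real_normed_algebra_1, banach}"
    and g :: "nat \<Rightarrow> 'a \<Rightarrow> 'a"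
    and x :: "int \<Rightarrow> 'a"
    and k :: nat and \<sigma> :: real
  assumes k: "k \<ge> 1"
    and nz: "a k \<noteq> 0 \<or> b k \<noteq> 0"
    and sigma: "\<sigma> > 0"
    and gbound: "\<And>n \<xi>. norm (g n \<xi>) \<le> \<sigma> * norm \<xi>"
    and rec: "\<And>n::int. n \<ge> 0 \<Longrightarrow>
       x (n + 1) = (\<Sum>i=0..k. a i * x (n - int i)) + g (nat n) (\<Sum>i=0..k. b i * x (n - int i))"
    and cond: "(\<Sum>i=0..k. norm (a i) + \<sigma> * norm (b i)) < 1
       \<or> (\<exists>\<rho>. is_unit_elem \<rho> \<and> norm \<rho> < 1 \<and> polyP k a \<rho> = 0 \<and> polyQ k b \<rho> = 0
            \<and> (\<Sum>i=0..k-1. norm (pcoef a \<rho> i) + \<sigma> * norm (qcoef b \<rho> i)) < 1)"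
  shows "(\<lambda>n::nat. x (int n)) \<longlonglongrightarrow> 0"
proof -
  from cond consider (A) "(\<Sum>i=0..k. norm (a i) + \<sigma> * norm (b i)) < 1"
    | (B) \<rho> where "is_unit_elem \<rho>" "norm \<rho> < 1" "polyP k a \<rho> = 0" "polyQ k b \<rho> = 0"
        "(\<Sum>i=0..k-1. norm (pcoef a \<rho> i) + \<sigma> * norm (qcoef b \<rho> i)) < 1"
    by blast
  then show ?thesis
  proof cases
    case A
    define c where "c i = norm (a i) + \<sigma> * norm (b i)" for i
    have "(\<lambda>n. norm (x (int n))) \<longlonglongrightarrow> 0"
    proof (rule decay_int[of "\<lambda>N. norm (x N)" c k])
      show "0 \<le> norm (x N)" for N by simp
      show "0 \<le> c i" for i using sigma by (simp add: c_def)
      show "(\<Sum>i=0..k. c i) < 1" using A by (simp add: c_def)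
      fix N :: int assume N: "0 \<le> N"
      have "norm (x (N + 1)) = norm ((\<Sum>i=0..k. a i * x (N - int i)) + g (nat N) (\<Sum>i=0..k. b i * x (N - int i)))"
        using rec[OF N] by simp
      also have "\<dots> \<le> norm (\<Sum>i=0..k. a i * x (N - int i)) + norm (g (nat N) (\<Sum>i=0..k. b i * x (N - int i)))"
        by (rule norm_triangle_ineq)
      also have "\<dots> \<le> (\<Sum>i=0..k. norm (a i) * norm (x (N - int i))) + \<sigma> * (\<Sum>i=0..k. norm (b i) * norm (x (N - int i)))"
      proof (rule add_mono)
        show "norm (\<Sum>i=0..k. a i * x (N - int i)) \<le> (\<Sum>i=0..k. norm (a i) * norm (x (N - int i)))"
          by (rule order_trans[OF norm_sum sum_mono]) (rule norm_mult_ineq)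
        have "norm (\<Sum>i=0..k. b i * x (N - int i)) \<le> (\<Sum>i=0..k. norm (b i) * norm (x (N - int i)))"
          by (rule order_trans[OF norm_sum sum_mono]) (rule norm_mult_ineq)
        then show "norm (g (nat N) (\<Sum>i=0..k. b i * x (N - int i))) \<le> \<sigma> * (\<Sum>i=0..k. norm (b i) * norm (x (N - int i)))"
          using gbound[of "nat N" "\<Sum>i=0..k. b i * x (N - int i)"] sigma
          by (meson less_imp_le mult_left_mono order_trans)
      qed
      also have "\<dots> = (\<Sum>i=0..k. c i * norm (x (N - int i)))"
        by (simp add: c_def sum.distrib sum_distrib_left algebra_simps)
      finally show "norm (x (N + 1)) \<le> (\<Sum>i=0..k. c i * norm (x (N - int i)))" .
    qed
    then show ?thesis by (simp add: tendsto_norm_zero_iff)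
  next
    case B
    obtain K where kK: "k = Suc K" using k by (cases k) auto
    define u where "u N = x N - \<rho> * x (N - 1)" for N
    have uy: "u (N - int i) = x (N - int i) - \<rho> * x (N - int (Suc i))" for N i
      by (simp add: u_def algebra_simps)
    have qk: "qcoef b \<rho> K * \<rho> = - b k"
    proof -
      have "qcoef b \<rho> k = polyQ k b \<rho>" by (simp add: qcoef_def polyQ_def)
      then show ?thesis using B(4) qcoef_Suc[of b \<rho> K] kK by (simp add: eq_neg_iff_add_eq_0)
    qed
    have pk: "pcoef a \<rho> K * \<rho> = a k"
    proof -
      have "pcoef a \<rho> k = polyP k a \<rho>" by (simp add: pcoef_def polyP_def)
      then show ?thesis using B(3) pcoef_Suc[of a \<rho> K] kK by simp
    qed
    have Q: "(\<Sum>i=0..K. qcoef b \<rho> i * u (N - int i)) = (\<Sum>i=0..k. b i * x (N - int i))" for N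
    proof -
      define y where "y j = x (N - int j)" for j
      have "(\<Sum>i=0..K. qcoef b \<rho> i * u (N - int i)) = (\<Sum>i=0..K. qcoef b \<rho> i * (y i - \<rho> * y (Suc i)))"
        by (simp add: uy y_def)
      also have "\<dots> = qcoef b \<rho> 0 * y 0 + (\<Sum>i<K. b (Suc i) * y (Suc i)) - qcoef b \<rho> K * \<rho> * y (Suc K)"
        by (rule telescope) (rule qcoef_Suc)
      also have "\<dots> = b 0 * y 0 + (\<Sum>i<K. b (Suc i) * y (Suc i)) + b (Suc K) * y (Suc K)"
        using qk kK by (simp add: qcoef_def)
      also have "\<dots> = (\<Sum>i=0..k. b i * y i)" by (simp only: kK sum_split0)
      finally show ?thesis by (simp add: y_def)
    qed
    have P: "(\<Sum>i=0..K. pcoef a \<rho> i * u (N - int i)) = \<rho> * x N - (\<Sum>i=0..k. a i * x (N - int i))" for N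
    proof -
      define y where "y j = x (N - int j)" for j
      have "(\<Sum>i=0..K. pcoef a \<rho> i * u (N - int i)) = (\<Sum>i=0..K. pcoef a \<rho> i * (y i - \<rho> * y (Suc i)))"
        by (simp add: uy y_def)
      also have "\<dots> = pcoef a \<rho> 0 * y 0 + (\<Sum>i<K. (- a (Suc i)) * y (Suc i)) - pcoef a \<rho> K * \<rho> * y (Suc K)"
        by (rule telescope) (rule pcoef_Suc)
      also have "\<dots> = \<rho> * y 0 - (a 0 * y 0 + (\<Sum>i<K. a (Suc i) * y (Suc i)) + a (Suc K) * y (Suc K))"
        using pk kK by (simp add: pcoef_def algebra_simps sum_negf)
      also have "\<dots> = \<rho> * y 0 - (\<Sum>i=0..k. a i * y i)" by (simp only: kK sum_split0)
      finally show ?thesis by (simp add: y_def)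
    qed
    define c where "c i = norm (pcoef a \<rho> i) + \<sigma> * norm (qcoef b \<rho> i)" for i
    have ulim: "(\<lambda>n. norm (u (int n))) \<longlonglongrightarrow> 0"
    proof (rule decay_int[of "\<lambda>N. norm (u N)" c K])
      show "0 \<le> norm (u N)" for N by simp
      show "0 \<le> c i" for i using sigma by (simp add: c_def)
      show "(\<Sum>i=0..K. c i) < 1" using B(5) kK by (simp add: c_def)
      fix N :: int assume N: "0 \<le> N"
      have "u (N + 1) = g (nat N) (\<Sum>i=0..K. qcoef b \<rho> i * u (N - int i)) - (\<Sum>i=0..K. pcoef a \<rho> i * u (N - int i))"
        unfolding P Q using rec[OF N] by (simp add: u_def)
      then have "norm (u (N + 1)) \<le> norm (g (nat N) (\<Sum>i=0..K. qcoef b \<rho> i * u (N - int i))) + norm (\<Sum>i=0..K. pcoef a \<rho> i * u (N - int i))"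
        by (simp add: norm_triangle_ineq4)
      also have "\<dots> \<le> \<sigma> * (\<Sum>i=0..K. norm (qcoef b \<rho> i) * norm (u (N - int i))) + (\<Sum>i=0..K. norm (pcoef a \<rho> i) * norm (u (N - int i)))"
      proof (rule add_mono)
        show "norm (\<Sum>i=0..K. pcoef a \<rho> i * u (N - int i)) \<le> (\<Sum>i=0..K. norm (pcoef a \<rho> i) * norm (u (N - int i)))"
          by (rule order_trans[OF norm_sum sum_mono]) (rule norm_mult_ineq)
        have "norm (\<Sum>i=0..K. qcoef b \<rho> i * u (N - int i)) \<le> (\<Sum>i=0..K. norm (qcoef b \<rho> i) * norm (u (N - int i)))"
          by (rule order_trans[OF norm_sum sum_mono]) (rule norm_mult_ineq)
        then show "norm (g (nat N) (\<Sum>i=0..K. qcoef b \<rho> i * u (N - int i))) \<le> \<sigma> * (\<Sum>i=0..K. norm (qcoef b \<rho> i) * norm (u (N - int i)))"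
          using gbound[of "nat N" "\<Sum>i=0..K. qcoef b \<rho> i * u (N - int i)"] sigma
          by (meson less_imp_le mult_left_mono order_trans)
      qed
      also have "\<dots> = (\<Sum>i=0..K. c i * norm (u (N - int i)))"
        by (simp add: c_def sum.distrib sum_distrib_left algebra_simps)
      finally show "norm (u (N + 1)) \<le> (\<Sum>i=0..K. c i * norm (u (N - int i)))" .
    qed
    have "(\<lambda>n. norm (x (int n))) \<longlonglongrightarrow> 0"
    proof (rule decay_inhom[of _ "norm \<rho>" "\<lambda>n. norm (u (int n))"])
      show "0 \<le> norm (x (int n))" for n by simp
      show "0 \<le> norm \<rho>" by simp
      show "norm \<rho> < 1" by (rule B(2))
      show "(\<lambda>n. norm (u (int n))) \<longlonglongrightarrow> 0" by (rule ulim)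
      fix n
      have "x (int (Suc n)) = u (int (Suc n)) + \<rho> * x (int n)" by (simp add: u_def)
      then have "norm (x (int (Suc n))) \<le> norm (u (int (Suc n))) + norm (\<rho> * x (int n))"
        by (simp add: norm_triangle_ineq)
      also have "\<dots> \<le> norm (u (int (Suc n))) + norm \<rho> * norm (x (int n))"
        by (simp add: norm_mult_ineq)
      finally show "norm (x (int (Suc n))) \<le> norm \<rho> * norm (x (int n)) + norm (u (int (Suc n)))" by simp
    qed
    then show ?thesis by (simp add: tendsto_norm_zero_iff)
  qed
qed

end
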